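(* Let $\Phi(\vec x)=\bigwedge_{i=1}^m f_i\mid g_i$ be a system of divisibility constraints in $d$ variables and let $p$ be a prime with $p\notin\mathbb P(\Phi)$. Then $\Phi$ has a solution $\vec b\in\mathbb N^d$ modulo $p$ such that $v_p(f_i(\vec b))=0$ for every $1\le i\le m$ and $\|\vec b\|_\infty\le p-1$.
   Context: Linear polynomials $f=a_1x_1+\dots+a_dx_d+c$ have integer coefficients. A system of divisibility constraints is $\Phi(\vec x)=\bigwedge_{i=1}^m f_i(\vec x)\mid g_i(\vec x)$ with $m\ge1$ and linear polynomials $f_i\neq 0$, $g_i$. For a prime $p$, $v_p$ is the $p$-adic valuation ($v_p(0)=\infty$); $\vec b\in\mathbb Z^d$ is a solution of $\Phi$ modulo $p$ if $f_i(\vec b)\ne0$ and $v_p(f_i(\vec b))\le v_p(g_i(\vec b))$ for all $i$. $\mathbb P(\Phi)$ is the set of primes $p$ with $p\le m$ or $p$ dividing some coefficient or constant of some left-hand side $f_i$. $\|\vec b\|_\infty$ is the maximum absolute value of the entries of $\vec b$. *)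

theory Defs
  imports "HOL-Computational_Algebra.Primes"
begin

text \<open>A linear polynomial a_1 x_1 + ... + a_d x_d + c with integer coefficients is
  represented by the pair (coefficient list [a_1,...,a_d], constant c).\<close>
type_synonym linpoly = "int list \<times> int"

definition eval_lin :: "linpoly \<Rightarrow> int list \<Rightarrow> int" where
  "eval_lin f b = (\<Sum>i<length (fst f). fst f ! i * b ! i) + snd f"

definition lin_nonzero :: "linpoly \<Rightarrow> bool" where
  "lin_nonzero f \<longleftrightarrow> (\<exists>a\<in>set (fst f). a \<noteq> 0) \<or> snd f \<noteq> 0"

definition is_div_system :: "nat \<Rightarrow> (linpoly \<times> linpoly) list \<Rightarrow> bool" where
  "is_div_system d \<Phi> \<longleftrightarrow> length \<Phi> \<ge> 1 \<and>
     (\<forall>(f, g)\<in>set \<Phi>. length (fst f) = d \<and> length (fst g) = d \<and> lin_nonzero f)"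

text \<open>p-adic valuation comparison with v_p(0) = infinity.\<close>
definition vp_le :: "nat \<Rightarrow> int \<Rightarrow> int \<Rightarrow> bool" where
  "vp_le p x y \<longleftrightarrow> y = 0 \<or> (x \<noteq> 0 \<and> multiplicity (int p) x \<le> multiplicity (int p) y)"

definition solution_mod :: "nat \<Rightarrow> (linpoly \<times> linpoly) list \<Rightarrow> int list \<Rightarrow> bool" where
  "solution_mod p \<Phi> b \<longleftrightarrow>
     (\<forall>(f, g)\<in>set \<Phi>. eval_lin f b \<noteq> 0 \<and> vp_le p (eval_lin f b) (eval_lin g b))"

definition bad_primes :: "(linpoly \<times> linpoly) list \<Rightarrow> nat set" where
  "bad_primes \<Phi> = {p. prime p \<and> (p \<le> length \<Phi> \<or>
     (\<exists>(f, g)\<in>set \<Phi>. (\<exists>a\<in>set (fst f). a \<noteq> 0 \<and> int p dvd a) \<or>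
                        (snd f \<noteq> 0 \<and> int p dvd snd f)))}"

end

theory Submission
  imports Defs
begin

definition nzp :: "nat \<Rightarrow> linpoly \<Rightarrow> bool" where
  "nzp p f \<longleftrightarrow> (\<exists>a\<in>set (fst f). \<not> int p dvd a) \<or> \<not> int p dvd snd f"

lemma eval_cons: "eval_lin (a # as, c) (t # b) = eval_lin (as, c + a * t) b"
  unfolding eval_lin_def by (simp only: fst_conv snd_conv length_Cons sum.lessThan_Suc_shift) simp

definition shiftp :: "int \<Rightarrow> linpoly \<Rightarrow> linpoly" where
  "shiftp t f = (tl (fst f), snd f + hd (fst f) * t)"

lemma bad_card:
  assumes p: "prime p" and f: "fst f \<noteq> []" and nz: "nzp p f"
  shows "card {t\<in>{0..<int p}. \<not> nzp p (shiftp t f)} \<le> 1"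
proof -
  obtain a as c where fe: "f = (a # as, c)" using f by (cases f; cases "fst f") auto
  have "t1 = t2" if t1: "t1\<in>{0..<int p}" "\<not> nzp p (shiftp t1 f)"
    and t2: "t2\<in>{0..<int p}" "\<not> nzp p (shiftp t2 f)" for t1 t2
  proof -
    have d1: "int p dvd c + a * t1" and d2: "int p dvd c + a * t2"
      and das: "\<forall>x\<in>set as. int p dvd x"
      using t1 t2 by (auto simp: nzp_def shiftp_def fe)
    have "int p dvd a * (t1 - t2)"
      using dvd_diff[OF d1 d2] by (simp add: algebra_simps)
    moreover have pi: "prime (int p)" using p by simp
    ultimately have "int p dvd a \<or> int p dvd (t1 - t2)"
      using prime_dvd_mult_iff by blast
    moreover have "\<not> int p dvd a"
    proof
      assume "int p dvd a"
      then have "int p dvd (c + a * t1) - a * t1" by (intro dvd_diff d1 dvd_mult2)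
      then have "int p dvd c" by simp
      with \<open>int p dvd a\<close> das nz show False by (auto simp: nzp_def fe)
    qed
    ultimately have "int p dvd (t1 - t2)" by simp
    then obtain k where k: "t1 - t2 = int p * k" by (auto elim: dvdE)
    have "k = 0"
    proof (rule ccontr)
      assume "k \<noteq> 0"
      then have "\<bar>k\<bar> \<ge> 1" by simp
      then have "int p * 1 \<le> int p * \<bar>k\<bar>" by (intro mult_left_mono) auto
      then have "\<bar>int p * k\<bar> \<ge> int p" by (simp add: abs_mult)
      with k t1 t2 show False by auto
    qed
    with k show ?thesis by simp
  qed
  moreover have "finite {t\<in>{0..<int p}. \<not> nzp p (shiftp t f)}" by (rule finite_subset[of _ "{0..<int p}"]) auto
  ultimately show ?thesis using card_le_Suc0_iff_eq[of "{t\<in>{0..<int p}. \<not> nzp p (shiftp t f)}"]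
    by (simp only: One_nat_def) blast
qed

lemma key:
  assumes p: "prime p"
  shows "length F < p \<Longrightarrow> \<forall>f\<in>set F. length (fst f) = d \<and> nzp p f \<Longrightarrow>
    \<exists>b. length b = d \<and> (\<forall>x\<in>set b. 0 \<le> x \<and> x \<le> int p - 1) \<and>
        (\<forall>f\<in>set F. \<not> int p dvd eval_lin f b)"
proof (induction d arbitrary: F)
  case 0
  show ?case
    by (rule exI[of _ "[]"]) (use 0 in \<open>auto simp: nzp_def eval_lin_def\<close>)
next
  case (Suc d)
  let ?B = "\<Union>f\<in>set F. {t\<in>{0..<int p}. \<not> nzp p (shiftp t f)}"
  have "card ?B \<le> (\<Sum>f\<in>set F. card {t\<in>{0..<int p}. \<not> nzp p (shiftp t f)})"
    by (rule card_UN_le) simp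
  also have "\<dots> \<le> (\<Sum>f\<in>set F. 1)"
    by (rule sum_mono, rule bad_card[OF p]) (use Suc.prems in auto)
  also have "\<dots> \<le> length F" by (simp add: card_length)
  finally have "card ?B < card {0..<int p}" using Suc.prems(1) by simp
  then obtain t where t: "t \<in> {0..<int p}" "t \<notin> ?B"
  proof -
    have fB: "finite ?B" by (rule finite_subset[of _ "{0..<int p}"]) auto
    have "\<not> {0..<int p} \<subseteq> ?B"
    proof
      assume "{0..<int p} \<subseteq> ?B"
      then have "card {0..<int p} \<le> card ?B" by (rule card_mono[OF fB])
      with \<open>card ?B < card {0..<int p}\<close> show False by simp
    qed
    then show ?thesis using that by blast
  qed
  let ?G = "map (shiftp t) F"
  have "\<forall>g\<in>set ?G. length (fst g) = d \<and> nzp p g"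
    using Suc.prems(2) t by (auto simp: shiftp_def)
  moreover have "length ?G < p" using Suc.prems(1) by simp
  ultimately obtain b where b: "length b = d" "\<forall>x\<in>set b. 0 \<le> x \<and> x \<le> int p - 1"
      "\<forall>g\<in>set ?G. \<not> int p dvd eval_lin g b"
    using Suc.IH by blast
  have "eval_lin f (t # b) = eval_lin (shiftp t f) b" if "f \<in> set F" for f
  proof -
    from that Suc.prems(2) have "length (fst f) = Suc d" by auto
    then obtain a as where "fst f = a # as" by (cases "fst f") auto
    then have "f = (a # as, snd f)" by (cases f) auto
    then show ?thesis by (metis eval_cons shiftp_def fst_conv snd_conv list.sel(1,3))
  qed
  then show ?case using b t
    by (intro exI[of _ "t # b"]) auto
qed

theorem mainTheorem8:
  fixes d p :: nat and \<Phi> :: "(linpoly \<times> linpoly) list"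
  assumes "is_div_system d \<Phi>"
    and "prime p"
    and "p \<notin> bad_primes \<Phi>"
  shows "\<exists>b :: int list. length b = d \<and> (\<forall>x\<in>set b. 0 \<le> x \<and> x \<le> int p - 1) \<and>
           solution_mod p \<Phi> b \<and>
           (\<forall>(f, g)\<in>set \<Phi>. multiplicity (int p) (eval_lin f b) = 0)"
proof -
  have len: "length (map fst \<Phi>) < p" using assms(2,3) by (auto simp: bad_primes_def)
  have nz: "\<forall>f\<in>set (map fst \<Phi>). length (fst f) = d \<and> nzp p f"
  proof
    fix f assume "f \<in> set (map fst \<Phi>)"
    then obtain g where fg: "(f, g) \<in> set \<Phi>" by auto
    then have "length (fst f) = d" "lin_nonzero f" using assms(1)
      by (auto simp: is_div_system_def)
    moreover have "\<forall>a\<in>set (fst f). a \<noteq> 0 \<longrightarrow> \<not> int p dvd a"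
      "snd f \<noteq> 0 \<longrightarrow> \<not> int p dvd snd f"
      using assms(2,3) fg unfolding bad_primes_def by fastforce+
    ultimately show "length (fst f) = d \<and> nzp p f"
      by (auto simp: lin_nonzero_def nzp_def)
  qed
  obtain b where b: "length b = d" "\<forall>x\<in>set b. 0 \<le> x \<and> x \<le> int p - 1"
    "\<forall>f\<in>set (map fst \<Phi>). \<not> int p dvd eval_lin f b"
    using key[OF assms(2) len nz] by blast
  have m0: "multiplicity (int p) (eval_lin f b) = 0" if "(f, g) \<in> set \<Phi>" for f g
    using b(3) that by (intro not_dvd_imp_multiplicity_0) force
  have ne: "eval_lin f b \<noteq> 0" if "(f, g) \<in> set \<Phi>" for f g
    using b(3) that by force
  show ?thesis
    using b m0 ne by (intro exI[of _ b]) (auto simp: solution_mod_def vp_le_def)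
qed

end
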